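(* Let $\theta=\mathbf{1}_n$. Let $d=\frac{c(n-N)^2-aN^2}{n(n-2N)}$ and $b=\frac{nc-(a+c)N}{n-2N}$. Under $H_0$ the upper-triangular entries of $A$ are i.i.d. $\mathrm{Bernoulli}(d)$. Under $H_1$, $X_1,\dots,X_n$ are i.i.d. $\mathrm{Bernoulli}(N/n)$ and, conditionally on them, the upper-triangular entries of $A$ are independent with $\mathbb{P}(A_{ij}=1)=a$ if $X_i=X_j=1$, $c$ if $X_i=X_j=0$, and $b$ otherwise. Suppose, as $n\to\infty$, $0<c<a$, $c<1-\delta$ for a constant $\delta>0$, $b\ge0$, $N<n/3$, $D=O(\log n)$, and $$\limsup_{n\to\infty}\Big\{\Big(\log_n\tfrac{N}{\sqrt n}+\log_n\tfrac{a-c}{\sqrt c}\Big)\vee\Big(\sqrt{D/2-1}\,\log_n\tfrac{a-c}{\sqrt c}\Big)\Big\}<0.$$ Then for any sequence of polynomials $\phi_n$ of degree at most $D$ in the entries $\{A_{ij}\}_{i<j}$ with $\mathbb{E}_{H_0}\phi_n(A)=0$ and $\mathrm{Var}_{H_0}(\phi_n(A))=1$, we have $\mathbb{E}_{H_1}\phi_n(A)=o(1)$; indeed the supremum of $\mathbb{E}_{H_1}\phi_n(A)$ over all such polynomials is $o(1)$.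
   Context: $A$ is symmetric with zero diagonal; $\log_n x=\log x/\log n$. *)

theory Defs
  imports Complex_Main "HOL-Library.Landau_Symbols" "HOL-Library.Liminf_Limsup" "HOL-Library.Extended_Real"
begin

(* Upper-triangular index pairs (i,j), i<j<n; a graph / symmetric zero-diagonal
   adjacency matrix is identified with the set G of pairs where A_ij = 1. *)
definition edges :: "nat \<Rightarrow> (nat \<times> nat) set" where
  "edges n = {(i,j). i < j \<and> j < n}"

definition d_par :: "nat \<Rightarrow> real \<Rightarrow> real \<Rightarrow> real \<Rightarrow> real" where
  "d_par n N a c = (c * (real n - N)^2 - a * N^2) / (real n * (real n - 2 * N))"

definition b_par :: "nat \<Rightarrow> real \<Rightarrow> real \<Rightarrow> real \<Rightarrow> real" where
  "b_par n N a c = (real n * c - (a + c) * N) / (real n - 2 * N)"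

definition null_prob :: "nat \<Rightarrow> real \<Rightarrow> (nat \<times> nat) set \<Rightarrow> real" where
  "null_prob n q G = (\<Prod>e\<in>edges n. if e \<in> G then q else 1 - q)"

(* edge probability given the labels X (X = set of i with X_i = 1) *)
definition edge_p :: "real \<Rightarrow> real \<Rightarrow> real \<Rightarrow> nat set \<Rightarrow> nat \<times> nat \<Rightarrow> real" where
  "edge_p a b c X e = (if fst e \<in> X \<and> snd e \<in> X then a
                       else if fst e \<notin> X \<and> snd e \<notin> X then c else b)"

definition alt_prob :: "nat \<Rightarrow> real \<Rightarrow> real \<Rightarrow> real \<Rightarrow> (nat \<times> nat) set \<Rightarrow> real" where
  "alt_prob n N a c G =
     (\<Sum>X\<in>Pow {..<n}.
        (\<Prod>i<n. if i \<in> X then N / real n else 1 - N / real n) *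
        (\<Prod>e\<in>edges n. if e \<in> G then edge_p a (b_par n N a c) c X e
                                 else 1 - edge_p a (b_par n N a c) c X e))"

definition E_null :: "nat \<Rightarrow> real \<Rightarrow> ((nat \<times> nat) set \<Rightarrow> real) \<Rightarrow> real" where
  "E_null n q f = (\<Sum>G\<in>Pow (edges n). null_prob n q G * f G)"

definition Var_null :: "nat \<Rightarrow> real \<Rightarrow> ((nat \<times> nat) set \<Rightarrow> real) \<Rightarrow> real" where
  "Var_null n q f = E_null n q (\<lambda>G. (f G - E_null n q f)^2)"

definition E_alt :: "nat \<Rightarrow> real \<Rightarrow> real \<Rightarrow> real \<Rightarrow> ((nat \<times> nat) set \<Rightarrow> real) \<Rightarrow> real" where
  "E_alt n N a c f = (\<Sum>G\<in>Pow (edges n). alt_prob n N a c G * f G)"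

(* phi is (the evaluation on adjacency matrices of) a real polynomial of degree
   at most D in the variables A_e, e \<in> edges n: a finite linear combination of
   monomials prod_e A_e^(alpha e) with total degree sum_e alpha e \<le> D. *)
definition lowdeg_poly :: "nat \<Rightarrow> nat \<Rightarrow> ((nat \<times> nat) set \<Rightarrow> real) \<Rightarrow> bool" where
  "lowdeg_poly n D phi \<longleftrightarrow>
     (\<exists>F coef. finite F \<and>
        (\<forall>\<alpha>\<in>F. (\<forall>e. e \<notin> edges n \<longrightarrow> \<alpha> e = 0) \<and> (\<Sum>e\<in>edges n. \<alpha> e) \<le> D) \<and>
        (\<forall>G. G \<subseteq> edges n \<longrightarrow>
           phi G = (\<Sum>\<alpha>\<in>F. coef \<alpha> * (\<Prod>e\<in>edges n. (of_bool (e \<in> G) :: real) ^ \<alpha> e))))"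

end

theory Submission
  imports Defs "HOL-Analysis.Analysis" "HOL-Real_Asymp.Real_Asymp"
begin


lemma finite_edges[simp]: "finite (edges n)"
proof -
  have "edges n \<subseteq> {..<n} \<times> {..<n}" by (auto simp: edges_def)
  thus ?thesis by (rule finite_subset) auto
qed

lemma pow_prod:
  fixes f g :: "'a \<Rightarrow> real"
  assumes "finite E"
  shows "(\<Sum>G\<in>Pow E. \<Prod>e\<in>E. (if e \<in> G then f e else g e)) = (\<Prod>e\<in>E. f e + g e)"
proof -
  have "(\<Prod>e\<in>E. f e + g e) = (\<Sum>X\<in>Pow E. (\<Prod>x\<in>X. f x) * (\<Prod>x\<in>E-X. g x))"
    by (rule prod_add[OF assms])
  also have "\<dots> = (\<Sum>G\<in>Pow E. \<Prod>e\<in>E. (if e \<in> G then f e else g e))"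
  proof (rule sum.cong)
    fix X assume "X \<in> Pow E"
    hence "E \<inter> {x. x \<in> X} = X" "E \<inter> - {x. x \<in> X} = E - X" by auto
    thus "(\<Prod>x\<in>X. f x) * (\<Prod>x\<in>E-X. g x) = (\<Prod>e\<in>E. (if e \<in> X then f e else g e))"
      using prod.If_cases[OF assms, of "\<lambda>x. x \<in> X" f g] by simp
  qed simp
  finally show ?thesis by simp
qed

lemma pow_prod_weighted:
  fixes r :: "'a \<Rightarrow> real" and h :: "'a \<Rightarrow> bool \<Rightarrow> real"
  assumes "finite E"
  shows "(\<Sum>G\<in>Pow E. (\<Prod>e\<in>E. if e \<in> G then r e else 1 - r e) * (\<Prod>e\<in>E. h e (e \<in> G)))
       = (\<Prod>e\<in>E. r e * h e True + (1 - r e) * h e False)"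
proof -
  have "(\<Sum>G\<in>Pow E. (\<Prod>e\<in>E. if e \<in> G then r e else 1 - r e) * (\<Prod>e\<in>E. h e (e \<in> G)))
      = (\<Sum>G\<in>Pow E. \<Prod>e\<in>E. (if e \<in> G then r e * h e True else (1 - r e) * h e False))"
    by (intro sum.cong refl) (auto simp: prod.distrib[symmetric] intro!: prod.cong)
  also have "\<dots> = (\<Prod>e\<in>E. r e * h e True + (1 - r e) * h e False)"
    by (rule pow_prod[OF assms])
  finally show ?thesis .
qed

definition Lf :: "nat \<Rightarrow> ((nat \<times> nat) set \<Rightarrow> real) \<Rightarrow> ((nat \<times> nat) set \<Rightarrow> real) \<Rightarrow> real" where
  "Lf n P f = (\<Sum>G\<in>Pow (edges n). P G * f G)"

lemma Lf_cong: "(\<And>G. G \<subseteq> edges n \<Longrightarrow> f G = g G) \<Longrightarrow> Lf n P f = Lf n P g"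
  unfolding Lf_def by (intro sum.cong) auto

lemma Lf_sum: "finite I \<Longrightarrow> Lf n P (\<lambda>G. \<Sum>i\<in>I. c i * f i G) = (\<Sum>i\<in>I. c i * Lf n P (f i))"
  unfolding Lf_def by (simp add: sum_distrib_left sum_distrib_right mult_ac sum.swap[of _ I])

definition chi :: "real \<Rightarrow> (nat \<times> nat) set \<Rightarrow> (nat \<times> nat) set \<Rightarrow> real" where
  "chi q S G = (\<Prod>e\<in>S. of_bool (e \<in> G) - q)"

lemma chi_ext: "S \<subseteq> edges n \<Longrightarrow> chi q S G = (\<Prod>e\<in>edges n. if e \<in> S then of_bool (e \<in> G) - q else 1)"
  unfolding chi_def using prod.inter_restrict[OF finite_edges[of n], where g="\<lambda>e. of_bool (e \<in> G) - q" and B=S]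
  by (simp add: Int_absorb1 inf.absorb2)

lemma E_null_Lf: "E_null n q f = Lf n (null_prob n q) f"
  by (simp add: E_null_def Lf_def)

lemma E_alt_Lf: "E_alt n N a c f = Lf n (alt_prob n N a c) f"
  by (simp add: E_alt_def Lf_def)

lemma null_prod:
  "Lf n (null_prob n q) (\<lambda>G. \<Prod>e\<in>edges n. h e (e \<in> G)) = (\<Prod>e\<in>edges n. q * h e True + (1 - q) * h e False)"
  unfolding Lf_def null_prob_def
  using pow_prod_weighted[OF finite_edges, of "\<lambda>_. q" n h] by simp

lemma null_chi_chi:
  assumes "S \<subseteq> edges n" "T \<subseteq> edges n"
  shows "Lf n (null_prob n q) (\<lambda>G. chi q S G * chi q T G) = (if S = T then (q * (1 - q)) ^ card S else 0)"
proof -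
  have "Lf n (null_prob n q) (\<lambda>G. chi q S G * chi q T G) =
        Lf n (null_prob n q) (\<lambda>G. \<Prod>e\<in>edges n. (\<lambda>e b. (if e \<in> S then of_bool b - q else 1) * (if e \<in> T then of_bool b - q else 1)) e (e \<in> G))"
    by (intro Lf_cong) (simp add: chi_ext[OF assms(1)] chi_ext[OF assms(2)] prod.distrib)
  also have "\<dots> = (\<Prod>e\<in>edges n. q * ((if e \<in> S then 1 - q else 1) * (if e \<in> T then 1 - q else 1))
                  + (1 - q) * ((if e \<in> S then 0 - q else 1) * (if e \<in> T then 0 - q else 1)))"
    by (subst null_prod) simp
  also have "\<dots> = (if S = T then (q * (1 - q)) ^ card S else 0)"
  proof (cases "S = T")
    case True
    have "(\<Prod>e\<in>edges n. q * ((if e \<in> S then 1 - q else 1) * (if e \<in> T then 1 - q else 1))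
                  + (1 - q) * ((if e \<in> S then 0 - q else 1) * (if e \<in> T then 0 - q else 1)))
        = (\<Prod>e\<in>edges n. if e \<in> S then q * (1 - q) else 1)"
    proof (intro prod.cong refl)
      fix e
      have "q*((1-q)*(1-q)) + (1-q)*((0-q)*(0-q)) = q*(1-q)" by algebra
      thus "q * ((if e \<in> S then 1 - q else 1) * (if e \<in> T then 1 - q else 1))
                  + (1 - q) * ((if e \<in> S then 0 - q else 1) * (if e \<in> T then 0 - q else 1)) = (if e \<in> S then q * (1 - q) else 1)"
        using True by simp
    qed
    also have "\<dots> = (q * (1 - q)) ^ card S"
      using prod.inter_restrict[OF finite_edges[of n], where g="\<lambda>_. q * (1 - q)" and B=S] assms
      by (simp add: inf.absorb2)
    finally show ?thesis using True by simp
  next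
    case False
    then obtain e where e: "e \<in> edges n" "(e \<in> S) \<noteq> (e \<in> T)" using assms by blast
    let ?h = "\<lambda>e. q * ((if e \<in> S then 1 - q else 1) * (if e \<in> T then 1 - q else 1))
                  + (1 - q) * ((if e \<in> S then 0 - q else 1) * (if e \<in> T then 0 - q else 1))"
    have "?h e = 0"
      using e(2) by (cases "e \<in> S") simp_all
    hence "prod ?h (edges n) = 0" using e(1) by (intro prod_zero finite_edges) blast
    thus ?thesis using False by simp
  qed
  finally show ?thesis .
qed

lemma null_chi:
  assumes "S \<subseteq> edges n"
  shows "Lf n (null_prob n q) (chi q S) = (if S = {} then 1 else 0)"
proof -
  have "Lf n (null_prob n q) (chi q S) = Lf n (null_prob n q) (\<lambda>G. chi q S G * chi q {} G)"
    by (rule Lf_cong) (simp add: chi_def)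
  thus ?thesis using null_chi_chi[OF assms empty_subsetI, of q] by simp
qed



lemma monomial_eq:
  fixes x :: real
  assumes "x = 0 \<or> x = 1"
  shows "x ^ k = (if k > 0 then x else 1)"
  using assms by auto

lemma expand_poly:
  assumes "lowdeg_poly n D \<phi>"
  shows "\<exists>ch. \<forall>G. G \<subseteq> edges n \<longrightarrow>
           \<phi> G = (\<Sum>S\<in>{S. S \<subseteq> edges n \<and> card S \<le> D}. ch S * chi q S G)"
proof -
  obtain F coef where F: "finite F"
    "\<forall>\<alpha>\<in>F. (\<forall>e. e \<notin> edges n \<longrightarrow> \<alpha> e = 0) \<and> (\<Sum>e\<in>edges n. \<alpha> e) \<le> D"
    "\<forall>G. G \<subseteq> edges n \<longrightarrow>
           \<phi> G = (\<Sum>\<alpha>\<in>F. coef \<alpha> * (\<Prod>e\<in>edges n. (of_bool (e \<in> G) :: real) ^ \<alpha> e))"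
    using assms unfolding lowdeg_poly_def by blast
  define T where "T \<alpha> = {e \<in> edges n. \<alpha> e > 0}" for \<alpha> :: "nat \<times> nat \<Rightarrow> nat"
  define SS where "SS = {S. S \<subseteq> edges n \<and> card S \<le> D}"
  have finSS: "finite SS" unfolding SS_def
    by (rule finite_subset[of _ "Pow (edges n)"]) auto
  define k where "k \<alpha> S = (if S \<subseteq> T \<alpha> then q ^ card (T \<alpha> - S) else 0)" for \<alpha> S
  have cardT: "card (T \<alpha>) \<le> D" if "\<alpha> \<in> F" for \<alpha>
  proof -
    have "card (T \<alpha>) = (\<Sum>e\<in>T \<alpha>. 1)" by simp
    also have "\<dots> \<le> (\<Sum>e\<in>T \<alpha>. \<alpha> e)" by (intro sum_mono) (auto simp: T_def)
    also have "\<dots> \<le> (\<Sum>e\<in>edges n. \<alpha> e)" by (intro sum_mono2) (auto simp: T_def)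
    also have "\<dots> \<le> D" using F(2) that by blast
    finally show ?thesis .
  qed
  have mono: "(\<Prod>e\<in>edges n. (of_bool (e \<in> G) :: real) ^ \<alpha> e) = (\<Sum>S\<in>SS. k \<alpha> S * chi q S G)"
    if "\<alpha> \<in> F" "G \<subseteq> edges n" for \<alpha> G
  proof -
    have "(\<Prod>e\<in>edges n. (of_bool (e \<in> G) :: real) ^ \<alpha> e)
        = (\<Prod>e\<in>edges n. if e \<in> {e. \<alpha> e > 0} then (of_bool (e \<in> G) :: real) else 1)"
      by (intro prod.cong refl) (auto simp: monomial_eq)
    also have "\<dots> = (\<Prod>e\<in>T \<alpha>. (of_bool (e \<in> G) :: real))"
      using prod.inter_restrict[OF finite_edges[of n], where g="\<lambda>e. (of_bool (e \<in> G) :: real)" and B="{e. \<alpha> e > 0}"]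
      by (simp add: T_def Int_def)
    also have "\<dots> = (\<Prod>e\<in>T \<alpha>. (of_bool (e \<in> G) - q) + q)" by simp
    also have "\<dots> = (\<Sum>X\<in>Pow (T \<alpha>). (\<Prod>e\<in>X. of_bool (e \<in> G) - q) * (\<Prod>e\<in>T \<alpha> - X. q))"
      by (rule prod_add) (simp add: T_def)
    also have "\<dots> = (\<Sum>X\<in>Pow (T \<alpha>). k \<alpha> X * chi q X G)"
      by (intro sum.cong refl) (auto simp: k_def chi_def)
    also have "\<dots> = (\<Sum>X\<in>SS \<inter> Pow (T \<alpha>). k \<alpha> X * chi q X G)"
    proof -
      have "Pow (T \<alpha>) \<subseteq> SS" unfolding SS_def
      proof
        fix X assume "X \<in> Pow (T \<alpha>)"
        hence "X \<subseteq> T \<alpha>" by auto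
        moreover have "finite (T \<alpha>)" by (simp add: T_def)
        ultimately have "card X \<le> card (T \<alpha>)" by (rule card_mono[rotated])
        thus "X \<in> {S. S \<subseteq> edges n \<and> card S \<le> D}"
          using cardT[OF that(1)] \<open>X \<subseteq> T \<alpha>\<close> by (auto simp: T_def)
      qed
      thus ?thesis by (simp add: Int_absorb1)
    qed
    also have "\<dots> = (\<Sum>X\<in>SS. k \<alpha> X * chi q X G)"
      by (rule sum.mono_neutral_left[OF finSS]) (auto simp: k_def)
    finally show ?thesis .
  qed
  define ch where "ch S = (\<Sum>\<alpha>\<in>F. coef \<alpha> * k \<alpha> S)" for S
  have "\<phi> G = (\<Sum>S\<in>SS. ch S * chi q S G)" if "G \<subseteq> edges n" for G
  proof -
    have "\<phi> G = (\<Sum>\<alpha>\<in>F. coef \<alpha> * (\<Sum>S\<in>SS. k \<alpha> S * chi q S G))"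
      using F(3) that mono that by simp
    also have "\<dots> = (\<Sum>S\<in>SS. ch S * chi q S G)"
      by (simp add: ch_def sum_distrib_left sum_distrib_right sum.swap[of _ F] mult_ac)
    finally show ?thesis .
  qed
  thus ?thesis unfolding SS_def by blast
qed



lemma fourier_bound:
  assumes q: "0 < q" "q < 1" and poly: "lowdeg_poly n D \<phi>"
    and E0: "E_null n q \<phi> = 0" and V1: "Var_null n q \<phi> = 1"
  shows "\<bar>Lf n P \<phi>\<bar> \<le> sqrt (\<Sum>S\<in>{S. S \<subseteq> edges n \<and> card S \<le> D} - {{}}.
            (Lf n P (chi q S))\<^sup>2 / (q * (1 - q)) ^ card S)"
proof -
  define SS where "SS = {S. S \<subseteq> edges n \<and> card S \<le> D}"
  have finSS: "finite SS" unfolding SS_def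
    by (rule finite_subset[of _ "Pow (edges n)"]) auto
  have emp: "{} \<in> SS" by (simp add: SS_def)
  obtain ch where ch: "\<And>G. G \<subseteq> edges n \<Longrightarrow> \<phi> G = (\<Sum>S\<in>SS. ch S * chi q S G)"
    using expand_poly[OF poly, of q] unfolding SS_def by blast
  define w where "w S = (q * (1 - q)) ^ card S" for S :: "(nat \<times> nat) set"
  have wpos: "w S > 0" for S using q by (simp add: w_def)
  have sub: "S \<subseteq> edges n" if "S \<in> SS" for S using that by (simp add: SS_def)
  have lin: "Lf n P' \<phi> = (\<Sum>S\<in>SS. ch S * Lf n P' (chi q S))" for P'
  proof -
    have "Lf n P' \<phi> = Lf n P' (\<lambda>G. \<Sum>S\<in>SS. ch S * chi q S G)" by (rule Lf_cong) (simp add: ch)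
    also have "\<dots> = (\<Sum>S\<in>SS. ch S * Lf n P' (chi q S))" by (rule Lf_sum[OF finSS])
    finally show ?thesis .
  qed
  have "E_null n q \<phi> = (\<Sum>S\<in>SS. ch S * (if S = {} then 1 else 0))"
    unfolding E_null_Lf lin by (intro sum.cong refl) (simp add: null_chi sub)
  also have "\<dots> = ch {}"
    using emp finSS by (simp add: if_distrib[of "\<lambda>x. _ * x"] sum.delta cong: if_cong)
  finally have ch0: "ch {} = 0" using E0 by simp
  note E0' = E0
  have pw: "(\<phi> G - 0)\<^sup>2 = (\<Sum>S\<in>SS. ch S * (\<Sum>T\<in>SS. ch T * (chi q S G * chi q T G)))"
    if G: "G \<subseteq> edges n" for G
    by (simp add: ch[OF G] power2_eq_square sum_distrib_left sum_distrib_right mult_ac)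
  have "Var_null n q \<phi> = Lf n (null_prob n q) (\<lambda>G. \<Sum>S\<in>SS. ch S * (\<Sum>T\<in>SS. ch T * (chi q S G * chi q T G)))"
    unfolding Var_null_def E_null_Lf E0'[unfolded E_null_Lf] by (rule Lf_cong) (simp only: pw)
  also have "\<dots> = (\<Sum>S\<in>SS. ch S * (\<Sum>T\<in>SS. ch T * Lf n (null_prob n q) (\<lambda>G. chi q S G * chi q T G)))"
    by (simp add: Lf_sum[OF finSS])
  also have "\<dots> = (\<Sum>S\<in>SS. ch S * (ch S * w S))"
  proof (intro sum.cong refl arg_cong2[where f="(*)"])
    fix S assume S: "S \<in> SS"
    have "(\<Sum>T\<in>SS. ch T * Lf n (null_prob n q) (\<lambda>G. chi q S G * chi q T G))
        = (\<Sum>T\<in>SS. if S = T then ch T * w S else 0)"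
      by (intro sum.cong refl) (simp add: null_chi_chi sub S w_def)
    also have "\<dots> = ch S * w S" using S finSS by (simp add: sum.delta)
    finally show "(\<Sum>T\<in>SS. ch T * Lf n (null_prob n q) (\<lambda>G. chi q S G * chi q T G)) = ch S * w S" .
  qed
  finally have V: "(\<Sum>S\<in>SS. (ch S)\<^sup>2 * w S) = 1"
    using V1 by (simp add: power2_eq_square mult_ac)
  have V': "(\<Sum>S\<in>SS - {{}}. (ch S)\<^sup>2 * w S) = 1"
    using V emp finSS ch0 by (simp add: sum_diff1)
  define \<Lambda> where "\<Lambda> = (\<Sum>S\<in>SS - {{}}. (Lf n P (chi q S))\<^sup>2 / w S)"
  have "Lf n P \<phi> = (\<Sum>S\<in>SS - {{}}. ch S * Lf n P (chi q S))"
    using lin[of P] emp finSS ch0 by (simp add: sum_diff1)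
  also have "\<dots> = (\<Sum>S\<in>SS - {{}}. (ch S * sqrt (w S)) * (Lf n P (chi q S) / sqrt (w S)))"
  proof (intro sum.cong refl)
    fix S
    have "sqrt (w S) > 0" using wpos by simp
    thus "ch S * Lf n P (chi q S) = (ch S * sqrt (w S)) * (Lf n P (chi q S) / sqrt (w S))"
      by (simp add: field_simps)
  qed
  finally have "(Lf n P \<phi>)\<^sup>2 \<le> (\<Sum>S\<in>SS - {{}}. (ch S * sqrt (w S))\<^sup>2) * (\<Sum>S\<in>SS - {{}}. (Lf n P (chi q S) / sqrt (w S))\<^sup>2)"
    by (simp only: Cauchy_Schwarz_ineq_sum)
  also have "\<dots> = \<Lambda>"
    using wpos V' by (simp add: \<Lambda>_def power_mult_distrib power_divide less_imp_le)
  finally have "(Lf n P \<phi>)\<^sup>2 \<le> \<Lambda>" .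
  hence "sqrt ((Lf n P \<phi>)\<^sup>2) \<le> sqrt \<Lambda>" by (rule real_sqrt_le_mono)
  thus ?thesis by (simp add: \<Lambda>_def SS_def w_def)
qed



definition wX :: "nat \<Rightarrow> real \<Rightarrow> nat set \<Rightarrow> real" where
  "wX n p X = (\<Prod>i<n. if i \<in> X then p else 1 - p)"

lemma alt_prob_alt: "alt_prob n N a c G = (\<Sum>X\<in>Pow {..<n}. wX n (N / real n) X *
        (\<Prod>e\<in>edges n. if e \<in> G then edge_p a (b_par n N a c) c X e else 1 - edge_p a (b_par n N a c) c X e))"
  by (simp add: alt_prob_def wX_def)

lemma alt_chi:
  assumes S: "S \<subseteq> edges n"
  shows "Lf n (alt_prob n N a c) (chi q S) =
    (\<Sum>X\<in>Pow {..<n}. wX n (N / real n) X * (\<Prod>e\<in>S. edge_p a (b_par n N a c) c X e - q))"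
proof -
  define r where "r X e = edge_p a (b_par n N a c) c X e" for X e
  define h where "h e b = (if e \<in> S then of_bool b - q else (1::real))" for e b
  have "Lf n (alt_prob n N a c) (chi q S) =
     (\<Sum>G\<in>Pow (edges n). \<Sum>X\<in>Pow {..<n}. wX n (N / real n) X *
        ((\<Prod>e\<in>edges n. if e \<in> G then r X e else 1 - r X e) * (\<Prod>e\<in>edges n. h e (e \<in> G))))"
    unfolding Lf_def alt_prob_alt r_def h_def chi_ext[OF S]
    by (simp add: sum_distrib_right sum_distrib_left mult_ac)
  also have "\<dots> = (\<Sum>X\<in>Pow {..<n}. wX n (N / real n) X *
        (\<Sum>G\<in>Pow (edges n). (\<Prod>e\<in>edges n. if e \<in> G then r X e else 1 - r X e) * (\<Prod>e\<in>edges n. h e (e \<in> G))))"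
    by (simp add: sum.swap[of _ "Pow (edges n)"] sum_distrib_left)
  also have "\<dots> = (\<Sum>X\<in>Pow {..<n}. wX n (N / real n) X *
        (\<Prod>e\<in>edges n. r X e * h e True + (1 - r X e) * h e False))"
    by (simp add: pow_prod_weighted)
  also have "\<dots> = (\<Sum>X\<in>Pow {..<n}. wX n (N / real n) X * (\<Prod>e\<in>edges n. if e \<in> S then r X e - q else 1))"
    by (intro sum.cong refl arg_cong2[where f="(*)"] prod.cong) (auto simp: h_def algebra_simps)
  also have "\<dots> = (\<Sum>X\<in>Pow {..<n}. wX n (N / real n) X * (\<Prod>e\<in>S. r X e - q))"
    using prod.inter_restrict[OF finite_edges[of n], where g="\<lambda>e. r _ e - q" and B=S] S
    by (simp add: inf.absorb2)
  finally show ?thesis by (simp add: r_def)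
qed

lemma edge_identity:
  fixes n :: nat and N a c :: real
  assumes "real n > 0" "real n - 2 * N \<noteq> 0"
  shows "edge_p a (b_par n N a c) c X e - d_par n N a c =
         (real n * (a - c) / (real n - 2 * N)) * (of_bool (fst e \<in> X) - N / real n) * (of_bool (snd e \<in> X) - N / real n)"
proof -
  have n0: "real n \<noteq> 0" using assms by simp
  consider "fst e \<in> X" "snd e \<in> X" | "fst e \<in> X" "snd e \<notin> X" | "fst e \<notin> X" "snd e \<in> X"
    | "fst e \<notin> X" "snd e \<notin> X" by blast
  thus ?thesis
  proof cases
    case 1 thus ?thesis using n0 assms(2)
      by (simp add: edge_p_def d_par_def divide_simps) algebra
  next
    case 2 thus ?thesis using n0 assms(2)
      by (simp add: edge_p_def d_par_def b_par_def divide_simps) algebra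
  next
    case 3 thus ?thesis using n0 assms(2)
      by (simp add: edge_p_def d_par_def b_par_def divide_simps) algebra
  next
    case 4 thus ?thesis using n0 assms(2)
      by (simp add: edge_p_def d_par_def divide_simps) algebra
  qed
qed



definition deg :: "(nat \<times> nat) set \<Rightarrow> nat \<Rightarrow> nat" where
  "deg S i = card {e\<in>S. fst e = i} + card {e\<in>S. snd e = i}"

definition mm :: "real \<Rightarrow> nat \<Rightarrow> real" where
  "mm p k = p * (1 - p) ^ k + (1 - p) * (0 - p) ^ k"

lemma edges_bound: "e \<in> edges n \<Longrightarrow> fst e < n \<and> snd e < n \<and> fst e < snd e"
  by (auto simp: edges_def)

lemma prod_group_fun:
  fixes u :: "nat \<Rightarrow> real" and g :: "nat \<times> nat \<Rightarrow> nat"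
  assumes S: "S \<subseteq> edges n" and g: "\<And>e. e \<in> S \<Longrightarrow> g e < n"
  shows "(\<Prod>e\<in>S. u (g e)) = (\<Prod>i<n. u i ^ card {e\<in>S. g e = i})"
proof -
  have fin: "finite S" using finite_subset[OF S finite_edges] .
  have "(\<Prod>e\<in>S. u (g e)) = (\<Prod>i<n. \<Prod>e\<in>{x\<in>S. g x = i}. u (g e))"
    by (rule prod.group[symmetric, OF fin]) (use g in auto)
  also have "\<dots> = (\<Prod>i<n. u i ^ card {e\<in>S. g e = i})"
  proof (intro prod.cong refl)
    fix i
    have "(\<Prod>e\<in>{x\<in>S. g x = i}. u (g e)) = (\<Prod>e\<in>{x\<in>S. g x = i}. u i)"
      by (rule prod.cong) auto
    thus "(\<Prod>e\<in>{x\<in>S. g x = i}. u (g e)) = u i ^ card {e\<in>S. g e = i}" by simp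
  qed
  finally show ?thesis .
qed

lemma prod_pairs:
  fixes u :: "nat \<Rightarrow> real"
  assumes S: "S \<subseteq> edges n"
  shows "(\<Prod>e\<in>S. u (fst e) * u (snd e)) = (\<Prod>i<n. u i ^ deg S i)"
proof -
  have "(\<Prod>e\<in>S. u (fst e) * u (snd e)) = (\<Prod>e\<in>S. u (fst e)) * (\<Prod>e\<in>S. u (snd e))"
    by (rule prod.distrib)
  also have "\<dots> = (\<Prod>i<n. u i ^ card {e\<in>S. fst e = i}) * (\<Prod>i<n. u i ^ card {e\<in>S. snd e = i})"
    using S edges_bound by (subst (1 2) prod_group_fun[OF S]) auto
  also have "\<dots> = (\<Prod>i<n. u i ^ deg S i)"
    by (simp add: deg_def power_add prod.distrib)
  finally show ?thesis .
qed

lemma beta_formula: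
  fixes n :: nat and N a c :: real
  assumes n: "real n > 0" "real n - 2 * N \<noteq> 0" and S: "S \<subseteq> edges n"
  shows "Lf n (alt_prob n N a c) (chi (d_par n N a c) S) =
     (real n * (a - c) / (real n - 2 * N)) ^ card S * (\<Prod>i<n. mm (N / real n) (deg S i))"
proof -
  define lam where "lam = real n * (a - c) / (real n - 2 * N)"
  define p where "p = N / real n"
  define u where "u X i = of_bool (i \<in> X) - p" for X :: "nat set" and i :: nat
  have "Lf n (alt_prob n N a c) (chi (d_par n N a c) S) =
     (\<Sum>X\<in>Pow {..<n}. wX n p X * (\<Prod>e\<in>S. lam * u X (fst e) * u X (snd e)))"
    unfolding alt_chi[OF S] edge_identity[OF n] lam_def u_def p_def by simp
  also have "\<dots> = (\<Sum>X\<in>Pow {..<n}. lam ^ card S * (wX n p X * (\<Prod>i<n. u X i ^ deg S i)))"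
  proof (intro sum.cong refl)
    fix X
    have "(\<Prod>e\<in>S. lam * u X (fst e) * u X (snd e)) = (\<Prod>e\<in>S. lam * (u X (fst e) * u X (snd e)))"
      by (simp only: mult.assoc)
    also have "\<dots> = lam ^ card S * (\<Prod>e\<in>S. u X (fst e) * u X (snd e))"
      by (simp only: prod.distrib[where g="\<lambda>_. lam" and h="\<lambda>e. u X (fst e) * u X (snd e)"] prod_constant)
    also have "\<dots> = lam ^ card S * (\<Prod>i<n. u X i ^ deg S i)"
      by (simp only: prod_pairs[OF S])
    finally show "wX n p X * (\<Prod>e\<in>S. lam * u X (fst e) * u X (snd e)) = lam ^ card S * (wX n p X * (\<Prod>i<n. u X i ^ deg S i))"
      by simp
  qed
  also have "\<dots> = lam ^ card S * (\<Sum>X\<in>Pow {..<n}. \<Prod>i<n. if i \<in> X then p * (1 - p) ^ deg S i else (1 - p) * (0 - p) ^ deg S i)"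
    unfolding sum_distrib_left[symmetric]
  proof (intro arg_cong2[where f="(*)"] sum.cong refl)
    fix X
    have "wX n p X * (\<Prod>i<n. u X i ^ deg S i) = (\<Prod>i<n. (if i \<in> X then p else 1 - p) * u X i ^ deg S i)"
      unfolding wX_def by (rule prod.distrib[symmetric])
    also have "\<dots> = (\<Prod>i<n. if i \<in> X then p * (1 - p) ^ deg S i else (1 - p) * (0 - p) ^ deg S i)"
      by (rule prod.cong) (auto simp: u_def)
    finally show "wX n p X * (\<Prod>i<n. u X i ^ deg S i) = (\<Prod>i<n. if i \<in> X then p * (1 - p) ^ deg S i else (1 - p) * (0 - p) ^ deg S i)" .
  qed
  also have "\<dots> = lam ^ card S * (\<Prod>i<n. mm p (deg S i))"
    by (subst pow_prod[OF finite_lessThan]) (simp add: mm_def)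
  finally show ?thesis by (simp add: lam_def p_def)
qed



definition VS :: "nat \<Rightarrow> (nat \<times> nat) set \<Rightarrow> nat set" where
  "VS n S = {i \<in> {..<n}. deg S i > 0}"

lemma finite_sub_edges: "S \<subseteq> edges n \<Longrightarrow> finite S"
  using finite_subset[OF _ finite_edges] by blast

lemma card_fiber_sum:
  assumes S: "S \<subseteq> edges n" and g: "\<And>e. e \<in> S \<Longrightarrow> g e < n"
  shows "(\<Sum>i<n. card {e\<in>S. g e = i}) = card S"
proof -
  have fin: "finite S" by (rule finite_sub_edges[OF S])
  have "(\<Sum>i<n. \<Sum>e\<in>{x\<in>S. g x = i}. (1::nat)) = (\<Sum>e\<in>S. 1)"
    by (rule sum.group[OF fin]) (use g in auto)
  thus ?thesis by simp
qed

lemma sum_deg: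
  assumes S: "S \<subseteq> edges n"
  shows "(\<Sum>i<n. deg S i) = 2 * card S"
proof -
  have "(\<Sum>i<n. deg S i) = (\<Sum>i<n. card {e\<in>S. fst e = i}) + (\<Sum>i<n. card {e\<in>S. snd e = i})"
    by (simp add: deg_def sum.distrib)
  also have "\<dots> = card S + card S"
    using S edges_bound by (subst (1 2) card_fiber_sum[OF S]) auto
  finally show ?thesis by simp
qed

lemma deg_pos:
  assumes S: "S \<subseteq> edges n" and e: "e \<in> S"
  shows "deg S (fst e) > 0" "deg S (snd e) > 0"
proof -
  have fin: "finite S" by (rule finite_sub_edges[OF S])
  have "card {e} \<le> card {x\<in>S. fst x = fst e}" using fin e by (intro card_mono) auto
  hence "card {x\<in>S. fst x = fst e} > 0" by simp
  thus "deg S (fst e) > 0" by (simp add: deg_def)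
  have "card {e} \<le> card {x\<in>S. snd x = snd e}" using fin e by (intro card_mono) auto
  hence "card {x\<in>S. snd x = snd e} > 0" by simp
  thus "deg S (snd e) > 0" by (simp add: deg_def)
qed

lemma S_sub_VS:
  assumes S: "S \<subseteq> edges n"
  shows "S \<subseteq> VS n S \<times> VS n S"
proof
  fix e assume e: "e \<in> S"
  have "e \<in> edges n" using S e by blast
  hence "fst e < n" "snd e < n" using edges_bound by blast+
  thus "e \<in> VS n S \<times> VS n S"
    using deg_pos[OF S e] by (cases e) (auto simp: VS_def)
qed

lemma VS_ge2:
  assumes S: "S \<subseteq> edges n" and ne: "S \<noteq> {}"
  shows "2 \<le> card (VS n S)"
proof -
  obtain e where e: "e \<in> S" using ne by blast
  have "e \<in> edges n" using S e by blast
  hence lt: "fst e < snd e" using edges_bound by blast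
  have "{fst e, snd e} \<subseteq> VS n S" using S_sub_VS[OF S] e by (cases e) auto
  hence "card {fst e, snd e} \<le> card (VS n S)" by (rule card_mono[rotated]) (simp add: VS_def)
  thus ?thesis using lt by simp
qed

lemma VS_le:
  assumes S: "S \<subseteq> edges n" and nd1: "\<forall>i<n. deg S i \<noteq> 1"
  shows "card (VS n S) \<le> card S"
proof -
  have "2 * card (VS n S) = (\<Sum>i\<in>VS n S. 2)" by simp
  also have "\<dots> \<le> (\<Sum>i\<in>VS n S. deg S i)"
  proof (intro sum_mono)
    fix i assume "i \<in> VS n S"
    hence "deg S i > 0" "deg S i \<noteq> 1" using nd1 by (auto simp: VS_def)
    thus "2 \<le> deg S i" by linarith
  qed
  also have "\<dots> \<le> (\<Sum>i<n. deg S i)" by (intro sum_mono2) (auto simp: VS_def)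
  also have "\<dots> = 2 * card S" by (rule sum_deg[OF S])
  finally show ?thesis by simp
qed

lemma mm_simps: "mm p 0 = 1" "mm p 1 = 0"
  by (simp_all add: mm_def algebra_simps)

lemma mm_bound:
  assumes "0 \<le> p" "p \<le> 1" "k \<ge> 2"
  shows "\<bar>mm p k\<bar> \<le> p"
proof -
  have "\<bar>mm p k\<bar> \<le> p * (1 - p) ^ k + (1 - p) * p ^ k"
    unfolding mm_def using assms by (auto simp: abs_mult power_abs intro!: order_trans[OF abs_triangle_ineq])
  also have "\<dots> \<le> p * (1 - p) ^ 2 + (1 - p) * p ^ 2"
    using assms by (intro add_mono mult_left_mono power_decreasing) auto
  also have "\<dots> = p * (1 - p)" by (simp add: power2_eq_square algebra_simps)
  also have "\<dots> \<le> p" using assms by (simp add: mult_left_le)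
  finally show ?thesis .
qed

lemma prod_mm_bound:
  assumes "0 \<le> p" "p \<le> 1" and nd1: "\<forall>i<n. deg S i \<noteq> 1"
  shows "\<bar>\<Prod>i<n. mm p (deg S i)\<bar> \<le> p ^ card (VS n S)"
proof -
  have "\<bar>\<Prod>i<n. mm p (deg S i)\<bar> = (\<Prod>i<n. \<bar>mm p (deg S i)\<bar>)" by (rule abs_prod)
  also have "\<dots> \<le> (\<Prod>i<n. if i \<in> {i. deg S i > 0} then p else 1)"
  proof (intro prod_mono conjI)
    fix i assume i: "i \<in> {..<n}"
    show "\<bar>mm p (deg S i)\<bar> \<le> (if i \<in> {i. deg S i > 0} then p else 1)"
    proof (cases "deg S i = 0")
      case True thus ?thesis by (simp add: mm_simps)
    next
      case False
      moreover have "deg S i \<noteq> 1" using nd1 i by simp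
      ultimately have "deg S i \<ge> 2" by linarith
      thus ?thesis using mm_bound[OF assms(1,2)] False by simp
    qed
  qed simp
  also have "\<dots> = p ^ card (VS n S)"
    using prod.inter_restrict[OF finite_lessThan[of n], where g="\<lambda>_. p" and B="{i. deg S i > 0}"]
    by (simp add: VS_def Int_def)
  finally show ?thesis .
qed



lemma beta_sq_bound:
  fixes n :: nat and N a c q :: real
  assumes n: "real n > 0" "0 < N" "3 * N < real n" and S: "S \<subseteq> edges n" "S \<noteq> {}"
    and q: "0 < q" "q < 1" and qd: "q = d_par n N a c"
  shows "(Lf n (alt_prob n N a c) (chi q S))\<^sup>2 / (q * (1 - q)) ^ card S \<le>
    (if 2 \<le> card (VS n S) \<and> card (VS n S) \<le> card S
     then ((real n * (a - c) / (real n - 2 * N))\<^sup>2 / (q * (1 - q))) ^ card S * (N / real n) ^ (2 * card (VS n S))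
     else 0)"
proof -
  define lam where "lam = real n * (a - c) / (real n - 2 * N)"
  define p where "p = N / real n"
  define PP where "PP = (\<Prod>i<n. mm p (deg S i))"
  define w where "w = q * (1 - q)"
  have wpos: "w > 0" using q by (simp add: w_def)
  have p01: "0 \<le> p" "p \<le> 1" using n by (auto simp: p_def)
  have beta: "Lf n (alt_prob n N a c) (chi q S) = lam ^ card S * PP"
    unfolding qd lam_def PP_def p_def by (rule beta_formula) (use n S in auto)
  have rhs_nn: "0 \<le> (lam\<^sup>2 / w) ^ card S * p ^ (2 * card (VS n S))"
    using wpos p01 by simp
  show ?thesis
  proof (cases "\<exists>i<n. deg S i = 1")
    case True
    then obtain i where "i < n" "deg S i = 1" by blast
    hence "PP = 0" unfolding PP_def using mm_simps(2)[of p] by (intro prod_zero) (auto intro!: bexI[of _ i])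
    thus ?thesis using beta rhs_nn by (simp add: lam_def p_def w_def)
  next
    case False
    hence nd1: "\<forall>i<n. deg S i \<noteq> 1" by blast
    have c1: "2 \<le> card (VS n S)" by (rule VS_ge2[OF S])
    have c2: "card (VS n S) \<le> card S" by (rule VS_le[OF S(1) nd1])
    have "\<bar>PP\<bar> \<le> p ^ card (VS n S)" unfolding PP_def by (rule prod_mm_bound[OF p01 nd1])
    hence "\<bar>PP\<bar>\<^sup>2 \<le> (p ^ card (VS n S))\<^sup>2" by (intro power_mono) auto
    hence P2: "PP\<^sup>2 \<le> p ^ (2 * card (VS n S))" by (simp add: power_mult[symmetric] mult.commute)
    have "(lam ^ card S * PP)\<^sup>2 / w ^ card S = (lam\<^sup>2 / w) ^ card S * PP\<^sup>2"
      by (simp add: power_mult_distrib power_divide power_mult[symmetric] mult.commute)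
    also have "\<dots> \<le> (lam\<^sup>2 / w) ^ card S * p ^ (2 * card (VS n S))"
      using wpos P2 by (intro mult_left_mono) auto
    finally show ?thesis using beta c1 c2 by (simp add: lam_def p_def w_def)
  qed
qed

lemma choose_le_pow: "n choose r \<le> n ^ r"
  by (cases "r \<le> n") (auto simp: binomial_le_pow binomial_eq_0)

lemma count_bound:
  "card {S. S \<subseteq> edges n \<and> card S = e \<and> card (VS n S) = k} \<le> n ^ k * (k * k) ^ e"
proof -
  define I where "I = {V. V \<subseteq> {..<n} \<and> card V = k}"
  have finI: "finite I" unfolding I_def by (rule finite_subset[of _ "Pow {..<n}"]) auto
  have sub: "{S. S \<subseteq> edges n \<and> card S = e \<and> card (VS n S) = k} \<subseteq> (\<Union>V\<in>I. {S. S \<subseteq> V \<times> V \<and> card S = e})"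
  proof
    fix S assume "S \<in> {S. S \<subseteq> edges n \<and> card S = e \<and> card (VS n S) = k}"
    hence S: "S \<subseteq> edges n" "card S = e" "card (VS n S) = k" by auto
    have "VS n S \<in> I" using S(3) by (auto simp: I_def VS_def)
    thus "S \<in> (\<Union>V\<in>I. {S. S \<subseteq> V \<times> V \<and> card S = e})" using S_sub_VS[OF S(1)] S(2) by blast
  qed
  have "card {S. S \<subseteq> edges n \<and> card S = e \<and> card (VS n S) = k} \<le> card (\<Union>V\<in>I. {S. S \<subseteq> V \<times> V \<and> card S = e})"
  proof (rule card_mono[OF _ sub])
    show "finite (\<Union>V\<in>I. {S. S \<subseteq> V \<times> V \<and> card S = e})"
    proof (intro finite_UN_I finI)
      fix V assume "V \<in> I"
      hence "finite (V \<times> V)" by (auto simp: I_def intro: finite_subset)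
      thus "finite {S. S \<subseteq> V \<times> V \<and> card S = e}" by (rule finite_subset[rotated, OF finite_Pow_iff[THEN iffD2]]) auto
    qed
  qed
  also have "\<dots> \<le> (\<Sum>V\<in>I. card {S. S \<subseteq> V \<times> V \<and> card S = e})" by (rule card_UN_le[OF finI])
  also have "\<dots> = (\<Sum>V\<in>I. (k * k) choose e)"
  proof (intro sum.cong refl)
    fix V assume V: "V \<in> I"
    hence fV: "finite V" by (auto simp: I_def intro: finite_subset)
    have "card {S. S \<subseteq> V \<times> V \<and> card S = e} = card (V \<times> V) choose e"
      using fV by (intro n_subsets) auto
    thus "card {S. S \<subseteq> V \<times> V \<and> card S = e} = (k * k) choose e" using V by (simp add: I_def card_cartesian_product)
  qed
  also have "\<dots> = (n choose k) * ((k * k) choose e)"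
    using n_subsets[of "{..<n}" k] by (simp add: I_def)
  also have "\<dots> \<le> n ^ k * (k * k) ^ e" by (intro mult_mono choose_le_pow) auto
  finally show ?thesis .
qed



definition HH :: "real \<Rightarrow> real \<Rightarrow> nat \<Rightarrow> nat \<Rightarrow> real" where
  "HH t p e k = (if 2 \<le> k \<and> k \<le> e then t ^ e * p ^ (2 * k) else 0)"

lemma HH_nonneg: "0 \<le> t \<Longrightarrow> 0 \<le> p \<Longrightarrow> 0 \<le> HH t p e k"
  by (simp add: HH_def)

lemma card_VS_le: "card (VS n S) \<le> n"
proof -
  have "card (VS n S) \<le> card {..<n}" by (rule card_mono) (auto simp: VS_def)
  thus ?thesis by simp
qed

lemma Lambda_bound:
  fixes n :: nat and N a c q :: real
  assumes n: "real n > 0" "0 < N" "3 * N < real n"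
    and q: "0 < q" "q < 1" and qd: "q = d_par n N a c"
  defines "t \<equiv> (real n * (a - c) / (real n - 2 * N))\<^sup>2 / (q * (1 - q))"
  defines "p \<equiv> N / real n"
  shows "(\<Sum>S\<in>{S. S \<subseteq> edges n \<and> card S \<le> D} - {{}}. (Lf n (alt_prob n N a c) (chi q S))\<^sup>2 / (q * (1 - q)) ^ card S)
     \<le> (\<Sum>e\<in>{0..D}. \<Sum>k\<in>{0..n}. HH t p e k * (real n ^ k * real (k * k) ^ e))"
proof -
  define SS where "SS = {S. S \<subseteq> edges n \<and> card S \<le> D}"
  have finSS: "finite SS" unfolding SS_def
    by (rule finite_subset[of _ "Pow (edges n)"]) auto
  have t0: "0 \<le> t" using q by (simp add: t_def)
  have p0: "0 \<le> p" using n by (simp add: p_def)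
  define g where "g S = (card S, card (VS n S))" for S :: "(nat \<times> nat) set"
  define H' where "H' y = HH t p (fst y) (snd y)" for y
  have "(\<Sum>S\<in>SS - {{}}. (Lf n (alt_prob n N a c) (chi q S))\<^sup>2 / (q * (1 - q)) ^ card S)
      \<le> (\<Sum>S\<in>SS - {{}}. H' (g S))"
  proof (rule sum_mono)
    fix S assume "S \<in> SS - {{}}"
    hence S: "S \<subseteq> edges n" "S \<noteq> {}" by (auto simp: SS_def)
    show "(Lf n (alt_prob n N a c) (chi q S))\<^sup>2 / (q * (1 - q)) ^ card S \<le> H' (g S)"
      using beta_sq_bound[OF n S q qd] by (simp add: H'_def g_def HH_def t_def p_def)
  qed
  also have "\<dots> \<le> (\<Sum>S\<in>SS. H' (g S))"
    by (rule sum_mono2[OF finSS]) (auto simp: H'_def HH_nonneg[OF t0 p0])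
  also have "\<dots> = (\<Sum>y\<in>{0..D} \<times> {0..n}. \<Sum>S\<in>{x\<in>SS. g x = y}. H' (g S))"
    by (rule sum.group[symmetric, OF finSS]) (auto simp: g_def SS_def card_VS_le)
  also have "\<dots> = (\<Sum>y\<in>{0..D} \<times> {0..n}. H' y * real (card {x\<in>SS. g x = y}))"
    by (intro sum.cong refl) (simp add: mult.commute)
  also have "\<dots> \<le> (\<Sum>y\<in>{0..D} \<times> {0..n}. H' y * (real n ^ snd y * real (snd y * snd y) ^ fst y))"
  proof (intro sum_mono mult_left_mono)
    fix y :: "nat \<times> nat"
    have "{x\<in>SS. g x = y} \<subseteq> {S. S \<subseteq> edges n \<and> card S = fst y \<and> card (VS n S) = snd y}"
      by (auto simp: SS_def g_def)
    hence "card {x\<in>SS. g x = y} \<le> card {S. S \<subseteq> edges n \<and> card S = fst y \<and> card (VS n S) = snd y}"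
      by (intro card_mono) (auto intro: finite_subset[OF _ finite_Pow_iff[THEN iffD2, OF finite_edges[of n]]])
    also have "\<dots> \<le> n ^ snd y * (snd y * snd y) ^ fst y" by (rule count_bound)
    finally have "real (card {x\<in>SS. g x = y}) \<le> real (n ^ snd y * (snd y * snd y) ^ fst y)"
      by (simp only: of_nat_le_iff)
    thus "real (card {x\<in>SS. g x = y}) \<le> real n ^ snd y * real (snd y * snd y) ^ fst y" by simp
    show "0 \<le> H' y" by (simp add: H'_def HH_nonneg[OF t0 p0])
  qed
  also have "\<dots> = (\<Sum>e\<in>{0..D}. \<Sum>k\<in>{0..n}. HH t p e k * (real n ^ k * real (k * k) ^ e))"
    by (simp add: sum.cartesian_product H'_def case_prod_beta)
  finally show ?thesis by (simp add: SS_def)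
qed



lemma powr_pow_eq: "0 < x \<Longrightarrow> (x powr a) ^ m = x powr (a * real m)"
  by (simp add: powr_realpow[symmetric] powr_powr)

lemma term_bound:
  fixes x s r \<mu> :: real and k e :: nat
  assumes x: "1 < x" and s: "0 < s" and r: "0 < r" and mu: "0 \<le> \<mu>"
    and h1: "log x s + log x r \<le> - \<mu>" and h2: "log x r \<le> - \<mu>" and ke: "k \<le> e"
  shows "s ^ (2 * k) * r ^ (2 * e) \<le> (x powr (- 2 * \<mu>)) ^ e"
proof -
  define \<sigma> where "\<sigma> = log x s"
  define \<rho> where "\<rho> = log x r"
  have x0: "0 < x" using x by simp
  have se: "s = x powr \<sigma>" using s x by (simp add: \<sigma>_def)
  have re: "r = x powr \<rho>" using r x by (simp add: \<rho>_def)
  have ex: "real k * \<sigma> + real e * \<rho> \<le> - \<mu> * real e"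
  proof (cases "\<sigma> \<le> 0")
    case True
    have "real k * \<sigma> \<le> 0" using True by (simp add: mult_nonneg_nonpos)
    moreover have "real e * \<rho> \<le> real e * (- \<mu>)" using h2 by (intro mult_left_mono) (auto simp: \<rho>_def)
    ultimately show ?thesis by (simp add: mult.commute)
  next
    case False
    have "real k * \<sigma> + real e * \<rho> = real k * (\<sigma> + \<rho>) + (real e - real k) * \<rho>" by (simp add: algebra_simps)
    also have "\<dots> \<le> real k * (- \<mu>) + (real e - real k) * (- \<mu>)"
      using h1 h2 ke by (intro add_mono mult_left_mono) (auto simp: \<sigma>_def \<rho>_def)
    also have "\<dots> = - \<mu> * real e" by (simp add: algebra_simps)
    finally show ?thesis .
  qed
  have "s ^ (2 * k) * r ^ (2 * e) = x powr (\<sigma> * real (2 * k) + \<rho> * real (2 * e))"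
    unfolding se re using x0 by (simp add: powr_pow_eq powr_add)
  also have "\<dots> \<le> x powr (- 2 * \<mu> * real e)"
    using ex x by (intro powr_mono) (auto simp: algebra_simps)
  also have "\<dots> = (x powr (- 2 * \<mu>)) ^ e" using x0 by (simp add: powr_pow_eq)
  finally show ?thesis .
qed

lemma Psi_bound:
  fixes n D :: nat and t p K r s \<mu> Y :: real
  assumes n: "1 < real n" and t: "0 \<le> t" "t \<le> K * r\<^sup>2" and p: "0 \<le> p" and K: "0 \<le> K"
    and ps: "p\<^sup>2 * real n = s\<^sup>2" and s: "0 < s" and r: "0 < r" and mu: "0 \<le> \<mu>"
    and h1: "log n s + log n r \<le> - \<mu>" and h2: "log n r \<le> - \<mu>"
    and Y: "Y = K * real D ^ 2 * real n powr (- 2 * \<mu>)" "Y \<le> 1"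
  shows "(\<Sum>e\<in>{0..D}. \<Sum>k\<in>{0..n}. HH t p e k * (real n ^ k * real (k * k) ^ e)) \<le> real (D + 1) * (real (D + 1) * Y)"
proof -
  have Y0: "0 \<le> Y" using Y K by simp
  have termb: "HH t p e k * (real n ^ k * real (k * k) ^ e) \<le> (if k \<in> {..D} then Y else 0)"
    if e: "e \<in> {0..D}" for e k
  proof (cases "2 \<le> k \<and> k \<le> e")
    case False thus ?thesis using Y0 by (auto simp: HH_def)
  next
    case True
    have kD: "k \<le> D" using True e by simp
    have "HH t p e k * (real n ^ k * real (k * k) ^ e) = t ^ e * (p\<^sup>2 * real n) ^ k * real (k * k) ^ e"
      using True by (simp add: HH_def power_mult power_mult_distrib mult_ac flip: power_mult power_even_eq)
    also have "\<dots> \<le> (K * r\<^sup>2) ^ e * s ^ (2 * k) * (real D ^ 2) ^ e"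
    proof -
      have "t ^ e \<le> (K * r\<^sup>2) ^ e" using t by (intro power_mono) auto
      moreover have "real (k * k) ^ e \<le> (real D ^ 2) ^ e"
        using kD by (intro power_mono) (auto simp: power2_eq_square intro: mult_mono)
      ultimately show ?thesis using ps t
        by (simp add: power_mult) (intro mult_mono, auto)
    qed
    also have "\<dots> = (K * real D ^ 2) ^ e * (s ^ (2 * k) * r ^ (2 * e))"
      unfolding power_mult_distrib power_mult[of r 2 e] by (simp add: mult_ac)
    also have "\<dots> \<le> (K * real D ^ 2) ^ e * (real n powr (- 2 * \<mu>)) ^ e"
      using K by (intro mult_left_mono term_bound[OF n s r mu h1 h2]) (use True in auto)
    also have "\<dots> = Y ^ e" by (simp add: Y(1) power_mult_distrib)
    also have "\<dots> \<le> Y" using Y0 Y(2) True by (intro power_le_one_iff[THEN iffD2] power_decreasing[of 1 e Y, simplified]) auto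
    finally show ?thesis using kD by simp
  qed
  have "(\<Sum>e\<in>{0..D}. \<Sum>k\<in>{0..n}. HH t p e k * (real n ^ k * real (k * k) ^ e))
      \<le> (\<Sum>e\<in>{0..D}. \<Sum>k\<in>{0..n}. (if k \<in> {..D} then Y else 0))"
    by (intro sum_mono termb) auto
  also have "\<dots> = (\<Sum>e\<in>{0..D}. real (card ({0..n} \<inter> {..D})) * Y)"
  proof (intro sum.cong refl)
    fix e
    have "(\<Sum>k\<in>{0..n}. if k \<in> {..D} then Y else 0) = sum (\<lambda>_. Y) ({0..n} \<inter> {..D})"
      by (rule sum.inter_restrict[symmetric]) simp
    thus "(\<Sum>k\<in>{0..n}. if k \<in> {..D} then Y else 0) = real (card ({0..n} \<inter> {..D})) * Y"
      by (simp only: sum_constant)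
  qed
  also have "\<dots> \<le> (\<Sum>e\<in>{0..D}. real (D + 1) * Y)"
  proof (intro sum_mono mult_right_mono Y0)
    have "card ({0..n} \<inter> {..D}) \<le> card {..D}" by (rule card_mono) auto
    thus "real (card ({0..n} \<inter> {..D})) \<le> real (D + 1)" by simp
  qed
  also have "\<dots> = real (D + 1) * (real (D + 1) * Y)" by simp
  finally show ?thesis .
qed



lemma d_par_eq1:
  fixes n :: nat and N a c :: real
  assumes "0 < N" "3 * N < real n"
  shows "d_par n N a c = c - (a - c) * N\<^sup>2 / (real n * (real n - 2 * N))"
proof -
  have "real n > 0" "real n - 2 * N \<noteq> 0" using assms by auto
  thus ?thesis unfolding d_par_def by (simp add: divide_simps) algebra
qed

lemma d_par_eq2:
  fixes n :: nat and N a c :: real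
  assumes "0 < N" "3 * N < real n"
  shows "d_par n N a c = (N / real n)\<^sup>2 * a + (1 - N / real n)\<^sup>2 * c + 2 * (N / real n) * (1 - N / real n) * b_par n N a c"
proof -
  have "real n > 0" "real n - 2 * N \<noteq> 0" using assms by auto
  thus ?thesis unfolding d_par_def b_par_def by (simp add: divide_simps) algebra
qed

lemma param_facts:
  fixes n :: nat and N a c \<delta> :: real
  assumes N: "0 < N" "3 * N < real n" and ac: "0 < c" "c < a" "c < 1 - \<delta>" "0 < \<delta>"
    and b: "b_par n N a c \<ge> 0"
  defines "q \<equiv> d_par n N a c"
  shows "0 < q" "q < 1"
    "(real n * (a - c) / (real n - 2 * N))\<^sup>2 / (q * (1 - q)) \<le> (81 / (4 * \<delta>)) * ((a - c) / sqrt c)\<^sup>2"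
proof -
  define p where "p = N / real n"
  have n0: "real n > 0" using N by simp
  have p: "0 < p" "p < 1 / 3" using N n0 by (auto simp: p_def field_simps)
  have "q = p\<^sup>2 * a + (1 - p)\<^sup>2 * c + 2 * p * (1 - p) * b_par n N a c"
    unfolding q_def p_def by (rule d_par_eq2[OF N])
  moreover have "(1 - p)\<^sup>2 \<ge> 4 / 9"
  proof -
    have "2/3 \<le> 1 - p" using p by simp
    hence "(2/3)\<^sup>2 \<le> (1 - p)\<^sup>2" by (intro power_mono) auto
    thus ?thesis by (simp add: power2_eq_square)
  qed
  moreover have "0 \<le> p\<^sup>2 * a" "0 \<le> 2 * p * (1 - p) * b_par n N a c" using p ac b by auto
  ultimately have qlow: "q \<ge> 4 / 9 * c"
    using ac by (smt (verit) mult_right_mono)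
  have "0 \<le> (a - c) * N\<^sup>2 / (real n * (real n - 2 * N))" using ac N by simp
  hence qup: "q \<le> c" unfolding q_def d_par_eq1[OF N] by simp
  show q0: "0 < q" using qlow ac by simp
  show q1: "q < 1" using qup ac by simp
  define lam where "lam = real n * (a - c) / (real n - 2 * N)"
  have lam0: "0 \<le> lam" using ac N by (simp add: lam_def)
  have lam3: "lam \<le> 3 * (a - c)"
  proof -
    have h: "0 \<le> (a - c) * (2 * real n - 6 * N)" using ac N by (intro mult_nonneg_nonneg) auto
    have "real n * (a - c) \<le> 3 * (a - c) * (real n - 2 * N)" using h
      by (simp add: algebra_simps)
    thus ?thesis using N unfolding lam_def by (simp add: divide_le_eq)
  qed
  have "lam\<^sup>2 \<le> (3 * (a - c))\<^sup>2" using lam0 lam3 by (intro power_mono) auto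
  moreover have "(4 / 9 * c) * \<delta> \<le> q * (1 - q)"
    using qlow qup ac q0 by (intro mult_mono) auto
  moreover have "0 < (4 / 9 * c) * \<delta>" using ac by simp
  ultimately have "lam\<^sup>2 / (q * (1 - q)) \<le> (3 * (a - c))\<^sup>2 / ((4 / 9 * c) * \<delta>)"
    by (intro frac_le) auto
  also have "\<dots> = (81 / (4 * \<delta>)) * ((a - c) / sqrt c)\<^sup>2"
    using ac by (simp add: power_divide power_mult_distrib field_simps) (simp add: power2_eq_square algebra_simps)
  finally show "(real n * (a - c) / (real n - 2 * N))\<^sup>2 / (q * (1 - q)) \<le> (81 / (4 * \<delta>)) * ((a - c) / sqrt c)\<^sup>2"
    by (simp add: lam_def)
qed



lemma gfun_lim:
  assumes "C > 0" "\<eta> > 0"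
  shows "((\<lambda>n::nat. K * ((1 + C * ln (real n))^4 * exp (-2 * \<eta> * ln (real n) / sqrt (1 + C * ln (real n))))) \<longlongrightarrow> 0) sequentially"
proof -
  have "((\<lambda>x::real. (1 + C * ln x)^4 * exp (-2 * \<eta> * ln x / sqrt (1 + C * ln x))) \<longlongrightarrow> 0) at_top"
    using assms by real_asymp
  hence "((\<lambda>n::nat. (1 + C * ln (real n))^4 * exp (-2 * \<eta> * ln (real n) / sqrt (1 + C * ln (real n)))) \<longlongrightarrow> 0) sequentially"
    by (rule filterlim_compose[OF _ filterlim_real_sequentially])
  thus ?thesis by (rule tendsto_mult_right_zero)
qed

theorem theorem6:
  fixes N a c :: "nat \<Rightarrow> real" and D :: "nat \<Rightarrow> nat" and \<delta> :: real
  assumes "\<delta> > 0"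
    and "eventually (\<lambda>n. 0 < c n \<and> c n < a n \<and> a n \<le> 1 \<and> c n < 1 - \<delta> \<and>
                         b_par n (N n) (a n) (c n) \<ge> 0 \<and>
                         0 < N n \<and> N n < real n / 3) sequentially"
    and "(\<lambda>n. real (D n)) \<in> O(\<lambda>n. ln (real n))"
    and "limsup (\<lambda>n. ereal (max
            (log (real n) (N n / sqrt (real n)) + log (real n) ((a n - c n) / sqrt (c n)))
            (sqrt (real (D n) / 2 - 1) * log (real n) ((a n - c n) / sqrt (c n))))) < 0"
  shows "\<forall>\<epsilon>>0. eventually (\<lambda>n. \<forall>\<phi>.
            lowdeg_poly n (D n) \<phi> \<and>
            E_null n (d_par n (N n) (a n) (c n)) \<phi> = 0 \<and>
            Var_null n (d_par n (N n) (a n) (c n)) \<phi> = 1 \<longrightarrow>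
            \<bar>E_alt n (N n) (a n) (c n) \<phi>\<bar> \<le> \<epsilon>) sequentially"
proof (intro allI impI)
  fix \<epsilon> :: real assume \<epsilon>: "\<epsilon> > 0"
  define f where "f n = max
            (log (real n) (N n / sqrt (real n)) + log (real n) ((a n - c n) / sqrt (c n)))
            (sqrt (real (D n) / 2 - 1) * log (real n) ((a n - c n) / sqrt (c n)))" for n
  have L: "limsup (\<lambda>n. ereal (f n)) < 0" unfolding f_def by (rule assms(4))
  obtain \<eta> where \<eta>: "\<eta> > 0" "eventually (\<lambda>n. f n < - \<eta>) sequentially"
  proof -
    obtain z where z: "limsup (\<lambda>n. ereal (f n)) < z" "z < 0" using L dense by blast
    have "z \<noteq> -\<infinity>" using z(1) by auto
    moreover have "z \<noteq> \<infinity>" using z(2) by auto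
    ultimately obtain z' where z': "z = ereal z'" by (cases z) auto
    have "eventually (\<lambda>n. ereal (f n) < z) sequentially" by (rule Limsup_lessD[OF z(1)])
    hence "eventually (\<lambda>n. f n < - (- z')) sequentially" by (simp add: z')
    moreover have "- z' > 0" using z(2) z' by simp
    ultimately show ?thesis using that by blast
  qed
  obtain C where C: "C > 0" "eventually (\<lambda>n. norm (real (D n)) \<le> C * norm (ln (real n))) sequentially"
    using assms(3) by (rule landau_o.bigE)
  define K where "K = 81 / (4 * \<delta>)"
  define g where "g n = K * ((1 + C * ln (real n))^4 * exp (-2 * \<eta> * ln (real n) / sqrt (1 + C * ln (real n))))" for n :: nat
  have "(g \<longlongrightarrow> 0) sequentially" unfolding g_def by (rule gfun_lim[OF C(1) \<eta>(1)])
  moreover have "0 < min 1 (\<epsilon>\<^sup>2)" using \<epsilon> by simp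
  ultimately have gev: "eventually (\<lambda>n. g n < min 1 (\<epsilon>\<^sup>2)) sequentially" by (rule order_tendstoD(2))
  have Kpos: "K > 0" using assms(1) by (simp add: K_def)
  show "eventually (\<lambda>n. \<forall>\<phi>.
            lowdeg_poly n (D n) \<phi> \<and>
            E_null n (d_par n (N n) (a n) (c n)) \<phi> = 0 \<and>
            Var_null n (d_par n (N n) (a n) (c n)) \<phi> = 1 \<longrightarrow>
            \<bar>E_alt n (N n) (a n) (c n) \<phi>\<bar> \<le> \<epsilon>) sequentially"
    using assms(2) \<eta>(2) C(2) gev eventually_ge_at_top[of 2]
  proof eventually_elim
    case (elim n)
    note hyp = elim(1) and fn = elim(2) and Dn = elim(3) and gn = elim(4) and n2 = elim(5)
    define q where "q = d_par n (N n) (a n) (c n)"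
    have N0: "0 < N n" "3 * N n < real n" using hyp by auto
    have pf: "0 < q" "q < 1"
      "(real n * (a n - c n) / (real n - 2 * N n))\<^sup>2 / (q * (1 - q)) \<le> K * ((a n - c n) / sqrt (c n))\<^sup>2"
      using param_facts[OF N0, of "c n" "a n" \<delta>] hyp assms(1) by (simp_all add: q_def K_def)
    define t where "t = (real n * (a n - c n) / (real n - 2 * N n))\<^sup>2 / (q * (1 - q))"
    define p where "p = N n / real n"
    define \<Psi> where "\<Psi> = (\<Sum>e\<in>{0..D n}. \<Sum>k\<in>{0..n}. HH t p e k * (real n ^ k * real (k * k) ^ e))"
    have n1: "1 < real n" using n2 by simp
    have lnpos: "0 < ln (real n)" using n1 by simp
    have DC: "real (D n) \<le> C * ln (real n)" using Dn lnpos by simp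
    have Psi: "\<Psi> \<le> \<epsilon>\<^sup>2"
    proof -
      consider "D n \<le> 1" | "D n = 2" | "D n \<ge> 3" by linarith
      thus ?thesis
      proof cases
        case 1
        have "\<Psi> = 0" unfolding \<Psi>_def using 1
          by (intro sum.neutral ballI) (auto simp: HH_def)
        thus ?thesis by simp
      next
        case 2
        hence "f n \<ge> 0" by (simp add: f_def)
        thus ?thesis using fn \<eta>(1) by simp
      next
        case 3
        define w where "w = sqrt (1 + C * ln (real n))"
        have w1: "1 \<le> w" using C(1) lnpos by (simp add: w_def)
        define \<mu> where "\<mu> = \<eta> / w"
        have mu0: "0 \<le> \<mu>" using \<eta>(1) w1 by (simp add: \<mu>_def)
        have mu_le: "\<mu> \<le> \<eta>" using \<eta>(1) w1 by (simp add: \<mu>_def divide_le_eq)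
        define s where "s = N n / sqrt (real n)"
        define r where "r = (a n - c n) / sqrt (c n)"
        have s0: "0 < s" using N0 by (simp add: s_def)
        have r0: "0 < r" using hyp by (simp add: r_def)
        have fn1: "log (real n) s + log (real n) r < - \<eta>" using fn by (simp add: f_def s_def r_def)
        have fn2: "sqrt (real (D n) / 2 - 1) * log (real n) r < - \<eta>" using fn by (simp add: f_def r_def)
        have h1: "log (real n) s + log (real n) r \<le> - \<mu>" using fn1 mu_le by simp
        have h2: "log (real n) r \<le> - \<mu>"
        proof -
          define z where "z = sqrt (real (D n) / 2 - 1)"
          have z0: "0 < z" using 3 by (simp add: z_def)
          have zw: "z \<le> w" unfolding z_def w_def using DC by (intro real_sqrt_le_mono) simp
          have zl: "z * log (real n) r < - \<eta>" unfolding z_def by (rule fn2)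
          have "log (real n) r < - \<eta> / z" unfolding pos_less_divide_eq[OF z0] using zl by (simp add: mult.commute)
          also have "\<dots> \<le> - \<eta> / w" using z0 zw \<eta>(1) by (simp add: frac_le)
          finally show ?thesis by (simp add: \<mu>_def)
        qed
        define Y where "Y = K * real (D n) ^ 2 * real n powr (- 2 * \<mu>)"
        have Y0: "0 \<le> Y" using Kpos by (simp add: Y_def)
        have powe: "real n powr (- 2 * \<mu>) = exp (-2 * \<eta> * ln (real n) / sqrt (1 + C * ln (real n)))"
          using n1 by (simp add: powr_def \<mu>_def w_def)
        have D4: "real (D n + 1) * (real (D n + 1) * real (D n) ^ 2) \<le> (1 + C * ln (real n)) ^ 4"
        proof -
          have a1: "real (D n + 1) \<le> 1 + C * ln (real n)" using DC by simp
          have a2: "real (D n) \<le> 1 + C * ln (real n)" using DC by simp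
          have "real (D n + 1) * (real (D n + 1) * (real (D n) * real (D n)))
              \<le> (1 + C * ln (real n)) * ((1 + C * ln (real n)) * ((1 + C * ln (real n)) * (1 + C * ln (real n))))"
            using a1 a2 by (intro mult_mono) auto
          thus ?thesis by (simp add: power2_eq_square power4_eq_xxxx)
        qed
        have big: "real (D n + 1) * (real (D n + 1) * Y) \<le> g n"
        proof -
          have "real (D n + 1) * (real (D n + 1) * Y)
              = K * (real (D n + 1) * (real (D n + 1) * real (D n) ^ 2)) * real n powr (- 2 * \<mu>)"
            by (simp add: Y_def mult_ac)
          also have "\<dots> \<le> K * (1 + C * ln (real n)) ^ 4 * real n powr (- 2 * \<mu>)"
            using D4 Kpos by (intro mult_right_mono mult_left_mono) auto
          also have "\<dots> = g n" unfolding g_def powe by (simp add: mult_ac)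
          finally show ?thesis .
        qed
        have "Y \<le> real (D n + 1) * (real (D n + 1) * Y)"
        proof -
          have "1 * (1 * Y) \<le> real (D n + 1) * (real (D n + 1) * Y)"
            using Y0 by (intro mult_mono) auto
          thus ?thesis by simp
        qed
        hence Y1: "Y \<le> 1" using big gn by simp
        have tK: "t \<le> K * r\<^sup>2" using pf(3) by (simp add: t_def r_def)
        have t0: "0 \<le> t" using pf by (simp add: t_def)
        have ps: "p\<^sup>2 * real n = s\<^sup>2" using n1 by (simp add: p_def s_def power_divide power2_eq_square)
        have "\<Psi> \<le> real (D n + 1) * (real (D n + 1) * Y)"
          unfolding \<Psi>_def
          by (rule Psi_bound[OF n1 t0 tK _ _ ps s0 r0 mu0 h1 h2 Y_def Y1])
             (use N0 Kpos in \<open>auto simp: p_def\<close>)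
        also have "\<dots> \<le> g n" by (rule big)
        also have "\<dots> \<le> \<epsilon>\<^sup>2" using gn by simp
        finally show ?thesis .
      qed
    qed
    show ?case
    proof (intro allI impI)
      fix \<phi> assume asm: "lowdeg_poly n (D n) \<phi> \<and> E_null n (d_par n (N n) (a n) (c n)) \<phi> = 0 \<and>
            Var_null n (d_par n (N n) (a n) (c n)) \<phi> = 1"
      have "\<bar>E_alt n (N n) (a n) (c n) \<phi>\<bar> \<le> sqrt (\<Sum>S\<in>{S. S \<subseteq> edges n \<and> card S \<le> D n} - {{}}.
            (Lf n (alt_prob n (N n) (a n) (c n)) (chi q S))\<^sup>2 / (q * (1 - q)) ^ card S)"
        unfolding E_alt_Lf using fourier_bound[OF pf(1,2), of n "D n" \<phi>] asm by (simp add: q_def)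
      also have "\<dots> \<le> sqrt \<Psi>"
        unfolding \<Psi>_def t_def p_def
        by (intro real_sqrt_le_mono Lambda_bound) (use N0 pf in \<open>auto simp: q_def\<close>)
      also have "\<dots> \<le> sqrt (\<epsilon>\<^sup>2)" using Psi by (rule real_sqrt_le_mono)
      also have "\<dots> = \<epsilon>" using \<epsilon> by simp
      finally show "\<bar>E_alt n (N n) (a n) (c n) \<phi>\<bar> \<le> \<epsilon>" .
    qed
  qed
qed

end
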